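(* Let $\mathcal{M}$ be a finite set of users and $\mathcal{R}$ a finite set of resource blocks, with given $\delta_r^k\in\{0,1\}$ and positive integers $d_k$. Let $\mathcal{X}(\mathcal{M})$ denote the set of $\mathbf{x}\in\{0,1\}^{R\times|\mathcal{M}|}$ satisfying $\sum_r x_r^k\ge d_k$ for $k\in\mathcal{M}$, $\sum_k x_r^k\le 1$ for $r\in\mathcal{R}$, and $x_r^k\le\delta_r^k$ for all $(r,k)$. Consider Algorithm 1: draw costs $c_r^k$ independently and uniformly at random from $[0,1]$, and solve the linear program $\min\sum_r\sum_k c_r^k x_r^k$ over the relaxation of $\mathcal{X}(\mathcal{M})$ obtained by replacing $\mathbf{x}\in\{0,1\}^{R\times|\mathcal{M}|}$ with $\mathbf{x}\in[0,1]^{R\times|\mathcal{M}|}$; if the LP is feasible, answer "yes" and return the LP optimal solution $\mathbf{x}^*$ as a schedule, and otherwise answer "no". Then Algorithm 1 always answers correctly whether $\mathcal{X}(\mathcal{M})$ is nonempty, and, when the answer is "yes", with probability $1$ the returned $\mathbf{x}^*$ belongs to $\mathcal{X}(\mathcal{M})$.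
   Context: Binary SNR model of URLLC scheduling: $x_r^k=1$ means block $r$ is assigned to user $k$, $\delta_r^k=1$ means block $r$ is active for user $k$, and user $k$ is satisfied if it receives at least $d_k$ active blocks; each block goes to at most one user. $\mathcal{X}(\mathcal{M})\neq\emptyset$ means the user set $\mathcal{M}$ can be scheduled simultaneously (question Q1). *)

theory Defs
  imports "HOL-Probability.Probability"
begin

definition relaxed_feasible ::
  "'r set \<Rightarrow> 'k set \<Rightarrow> ('r \<Rightarrow> 'k \<Rightarrow> real) \<Rightarrow> ('k \<Rightarrow> nat) \<Rightarrow> ('r \<Rightarrow> 'k \<Rightarrow> real) \<Rightarrow> bool" where
  "relaxed_feasible R M \<delta> d x \<longleftrightarrow>
     (\<forall>r k. (r \<notin> R \<or> k \<notin> M) \<longrightarrow> x r k = 0) \<and>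
     (\<forall>r\<in>R. \<forall>k\<in>M. 0 \<le> x r k \<and> x r k \<le> 1 \<and> x r k \<le> \<delta> r k) \<and>
     (\<forall>k\<in>M. (\<Sum>r\<in>R. x r k) \<ge> real (d k)) \<and>
     (\<forall>r\<in>R. (\<Sum>k\<in>M. x r k) \<le> 1)"

definition sched_set ::
  "'r set \<Rightarrow> 'k set \<Rightarrow> ('r \<Rightarrow> 'k \<Rightarrow> real) \<Rightarrow> ('k \<Rightarrow> nat) \<Rightarrow> ('r \<Rightarrow> 'k \<Rightarrow> real) set" where
  "sched_set R M \<delta> d = {x. relaxed_feasible R M \<delta> d x \<and> (\<forall>r\<in>R. \<forall>k\<in>M. x r k \<in> {0, 1})}"

definition lp_cost :: "'r set \<Rightarrow> 'k set \<Rightarrow> ('r \<times> 'k \<Rightarrow> real) \<Rightarrow> ('r \<Rightarrow> 'k \<Rightarrow> real) \<Rightarrow> real" where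
  "lp_cost R M c x = (\<Sum>r\<in>R. \<Sum>k\<in>M. c (r, k) * x r k)"

definition lp_optimal ::
  "'r set \<Rightarrow> 'k set \<Rightarrow> ('r \<Rightarrow> 'k \<Rightarrow> real) \<Rightarrow> ('k \<Rightarrow> nat) \<Rightarrow> ('r \<times> 'k \<Rightarrow> real) \<Rightarrow> ('r \<Rightarrow> 'k \<Rightarrow> real) \<Rightarrow> bool" where
  "lp_optimal R M \<delta> d c x \<longleftrightarrow> relaxed_feasible R M \<delta> d x \<and>
     (\<forall>y. relaxed_feasible R M \<delta> d y \<longrightarrow> lp_cost R M c x \<le> lp_cost R M c y)"

definition cost_distr :: "'r set \<Rightarrow> 'k set \<Rightarrow> ('r \<times> 'k \<Rightarrow> real) measure" where
  "cost_distr R M = PiM (R \<times> M) (\<lambda>_. uniform_measure lborel {0..1::real})"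

end

theory Submission
  imports Defs
begin

definition adjb :: "('r \<Rightarrow> 'k \<Rightarrow> bool) \<Rightarrow> ('r + 'k) \<Rightarrow> ('r + 'k) \<Rightarrow> bool" where
  "adjb P u v = (case u of Inl r \<Rightarrow> (case v of Inr k \<Rightarrow> P r k | Inl _ \<Rightarrow> False)
                          | Inr k \<Rightarrow> (case v of Inl r \<Rightarrow> P r k | Inr _ \<Rightarrow> False))"

lemma adjb_simps[simp]:
  "adjb P (Inl r) (Inr k) = P r k" "adjb P (Inr k) (Inl r) = P r k"
  "adjb P (Inl r) (Inl r') = False" "adjb P (Inr k) (Inr k') = False"
  by (simp_all add: adjb_def)

lemma adjb_sym: "adjb P u v \<Longrightarrow> adjb P v u"
  by (cases u; cases v; simp)

fun walk :: "('v \<Rightarrow> 'v \<Rightarrow> 'v) \<Rightarrow> 'v \<Rightarrow> 'v \<Rightarrow> nat \<Rightarrow> 'v" where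
  "walk nx s s1 0 = s"
| "walk nx s s1 (Suc 0) = s1"
| "walk nx s s1 (Suc (Suc n)) = nx (walk nx s s1 n) (walk nx s s1 (Suc n))"

lemma walk_exists:
  fixes P :: "'r \<Rightarrow> 'k \<Rightarrow> bool" and T :: "('r + 'k) \<Rightarrow> bool"
  assumes fin: "finite R" "finite M"
    and PRM: "\<And>r k. P r k \<Longrightarrow> r \<in> R \<and> k \<in> M"
    and deg: "\<And>u v. adjb P u v \<Longrightarrow> T v \<Longrightarrow> \<exists>w. adjb P v w \<and> w \<noteq> u"
    and P0: "P r0 k0"
  shows "\<exists>f a b. a < b \<and> inj_on f {a..<b} \<and> (\<forall>l. adjb P (f l) (f (Suc l)))
     \<and> (Suc a < b \<longrightarrow> f (Suc (Suc a)) \<noteq> f a)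
     \<and> (f b = f a \<or> (\<not> T (f a) \<and> \<not> T (f b)))"
proof -
  define V where "V = Inl ` R \<union> Inr ` M"
  have finV: "finite V" using fin by (simp add: V_def)
  have adjV: "adjb P u v \<Longrightarrow> v \<in> V" for u v
    using PRM by (cases u; cases v) (auto simp: V_def)
  obtain s s1 where ss1: "adjb P s s1" and sT: "(\<exists>u v. adjb P u v \<and> \<not> T u) \<Longrightarrow> \<not> T s"
  proof (cases "\<exists>u v. adjb P u v \<and> \<not> T u")
    case True
    then obtain u v where "adjb P u v" "\<not> T u" by blast
    then show ?thesis using that by blast
  next
    case False
    have "adjb P (Inl r0) (Inr k0)" using P0 by simp
    then show ?thesis using that[of "Inl r0" "Inr k0"] False by blast
  qed
  define nx where "nx u v = (if \<exists>w. adjb P v w \<and> w \<noteq> u then SOME w. adjb P v w \<and> w \<noteq> u else u)" for u v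
  define f where "f = walk nx s s1"
  have nx_adj: "adjb P u v \<Longrightarrow> adjb P v (nx u v)" for u v
  proof -
    assume a: "adjb P u v"
    show ?thesis
    proof (cases "\<exists>w. adjb P v w \<and> w \<noteq> u")
      case True
      have "adjb P v (SOME w. adjb P v w \<and> w \<noteq> u)" by (rule someI_ex[OF True, THEN conjunct1])
      moreover have "nx u v = (SOME w. adjb P v w \<and> w \<noteq> u)" unfolding nx_def by (rule if_P[OF True])
      ultimately show ?thesis by simp
    next
      case False
      have "nx u v = u" unfolding nx_def by (rule if_not_P[OF False])
      then show ?thesis using adjb_sym[OF a] by simp
    qed
  qed
  have nx_nb: "adjb P u v \<Longrightarrow> T v \<Longrightarrow> nx u v \<noteq> u" for u v
  proof -
    assume a: "adjb P u v" "T v"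
    from deg[OF a] have ex: "\<exists>w. adjb P v w \<and> w \<noteq> u" .
    have "(SOME w. adjb P v w \<and> w \<noteq> u) \<noteq> u" by (rule someI_ex[OF ex, THEN conjunct2])
    moreover have "nx u v = (SOME w. adjb P v w \<and> w \<noteq> u)" unfolding nx_def by (rule if_P[OF ex])
    ultimately show ?thesis by simp
  qed
  have fadj: "adjb P (f n) (f (Suc n))" for n
  proof (induction n rule: nat_less_induct)
    case (1 n)
    show ?case
    proof (cases n)
      case 0 then show ?thesis using ss1 by (simp add: f_def)
    next
      case (Suc m)
      then have "adjb P (f m) (f n)" using 1 by auto
      then show ?thesis using nx_adj Suc by (simp add: f_def)
    qed
  qed
  have fnb: "T (f (Suc n)) \<Longrightarrow> f (Suc (Suc n)) \<noteq> f n" for n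
    using nx_nb[OF fadj[of n]] by (simp add: f_def)
  have fV: "f n \<in> V" for n
  proof (cases n)
    case 0
    then show ?thesis using adjV[OF adjb_sym[OF ss1]] by (simp add: f_def)
  next
    case (Suc m)
    then show ?thesis using adjV[OF fadj[of m]] by simp
  qed
  define Q where "Q j = (1 \<le> j \<and> (f j \<in> f ` {0..<j} \<or> \<not> T (f j)))" for j
  have "\<not> inj_on f {0..card V}"
  proof
    assume "inj_on f {0..card V}"
    then have "card (f ` {0..card V}) = card {0..card V}" by (rule card_image)
    moreover have "card (f ` {0..card V}) \<le> card V"
      using fV finV by (intro card_mono) auto
    ultimately show False by simp
  qed
  then obtain i j where ij: "i \<in> {0..card V}" "j \<in> {0..card V}" "i \<noteq> j" "f i = f j"
    unfolding inj_on_def by blast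
  have "\<exists>j. Q j"
  proof (cases "i < j")
    case True
    then have "f j \<in> f ` {0..<j}" using ij by (metis atLeastLessThan_iff image_eqI zero_le)
    then have "Q j" using True unfolding Q_def by simp
    then show ?thesis ..
  next
    case False
    then have "j < i" using ij by simp
    then have "f i \<in> f ` {0..<i}" using ij by (metis atLeastLessThan_iff image_eqI zero_le)
    then have "Q i" using \<open>j < i\<close> unfolding Q_def by simp
    then show ?thesis ..
  qed
  define j0 where "j0 = (LEAST j. Q j)"
  have Qj0: "Q j0" unfolding j0_def by (rule LeastI_ex) fact
  have notQ: "l < j0 \<Longrightarrow> \<not> Q l" for l unfolding j0_def by (rule not_less_Least)
  have tight: "1 \<le> l \<Longrightarrow> l < j0 \<Longrightarrow> T (f l)" for l using notQ[of l] unfolding Q_def by auto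
  have inj: "inj_on f {0..<j0}"
  proof (rule inj_onI)
    fix p q assume pq: "p \<in> {0..<j0}" "q \<in> {0..<j0}" "f p = f q"
    show "p = q"
    proof (rule ccontr)
      assume "p \<noteq> q"
      then consider "p < q" | "q < p" by linarith
      then show False
      proof cases
        case 1
        then have "f q \<in> f ` {0..<q}" using pq by (metis atLeastLessThan_iff image_eqI zero_le)
        then have "Q q" using 1 unfolding Q_def by simp
        then show False using notQ pq by auto
      next
        case 2
        then have "f p \<in> f ` {0..<p}" using pq by (metis atLeastLessThan_iff image_eqI zero_le)
        then have "Q p" using 2 unfolding Q_def by simp
        then show False using notQ pq by auto
      qed
    qed
  qed
  have j0pos: "1 \<le> j0" using Qj0 Q_def by auto
  show ?thesis
  proof (cases "f j0 \<in> f ` {0..<j0}")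
    case True
    then obtain i where i: "i < j0" "f j0 = f i" by auto
    have "inj_on f {i..<j0}" using inj by (rule inj_on_subset) auto
    moreover have "Suc i < j0 \<longrightarrow> f (Suc (Suc i)) \<noteq> f i"
      using tight[of "Suc i"] fnb[of i] by auto
    ultimately show ?thesis using i fadj by blast
  next
    case False
    then have nT: "\<not> T (f j0)" using Qj0 Q_def by auto
    have "adjb P (f j0) (f (j0 - 1))" using adjb_sym[OF fadj[of "j0 - 1"]] j0pos by simp
    then have "\<not> T (f 0)" using sT nT by (auto simp: f_def)
    moreover have "Suc 0 < j0 \<longrightarrow> f (Suc (Suc 0)) \<noteq> f 0"
      using tight[of "Suc 0"] fnb[of 0] by auto
    ultimately show ?thesis using inj nT fadj j0pos
      by (intro exI[of _ f] exI[of _ 0] exI[of _ j0]) auto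
  qed
qed

lemma sum_ind_card:
  "finite S \<Longrightarrow> (\<Sum>l\<in>S. if Q l then 1 else 0::real) = real (card {l\<in>S. Q l})"
  by (simp add: sum.inter_filter[symmetric])

lemma card_le1_inj:
  assumes "inj_on f S" "finite S"
  shows "card {l\<in>S. f l = v \<and> X l} \<le> 1"
proof -
  have "\<forall>x\<in>{l\<in>S. f l = v \<and> X l}. \<forall>y\<in>{l\<in>S. f l = v \<and> X l}. x = y"
    using assms(1) by (auto simp: inj_on_def)
  then show ?thesis using assms(2) card_le_Suc0_iff_eq[of "{l\<in>S. f l = v \<and> X l}"] by simp
qed

lemma ind_sum_k1:
  assumes PRM: "\<And>r k. P r k \<Longrightarrow> r \<in> R \<and> k \<in> M" and fin: "finite M"
    and adj: "adjb P (f l) (f (Suc l))"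
  shows "(\<Sum>k\<in>M. (if f l = Inl r \<and> f (Suc l) = Inr k then 1 else 0::real)) = (if f l = Inl r then 1 else 0)"
proof (cases "f l = Inl r")
  case True
  show ?thesis
  proof (cases "f (Suc l)")
    case (Inl r')
    then show ?thesis using adj True by simp
  next
    case (Inr k')
    then have "k' \<in> M" using adj True PRM by auto
    then show ?thesis using True Inr fin by simp
  qed
qed simp

lemma ind_sum_k2:
  assumes PRM: "\<And>r k. P r k \<Longrightarrow> r \<in> R \<and> k \<in> M" and fin: "finite M"
    and adj: "adjb P (f l) (f (Suc l))"
  shows "(\<Sum>k\<in>M. (if f l = Inr k \<and> f (Suc l) = Inl r then 1 else 0::real)) = (if f (Suc l) = Inl r then 1 else 0)"
proof (cases "f (Suc l) = Inl r")
  case True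
  show ?thesis
  proof (cases "f l")
    case (Inl r')
    then show ?thesis using adj True by simp
  next
    case (Inr k')
    then have "k' \<in> M" using adj True PRM by auto
    then show ?thesis using True Inr fin by simp
  qed
qed simp

lemma ind_sum_r1:
  assumes PRM: "\<And>r k. P r k \<Longrightarrow> r \<in> R \<and> k \<in> M" and fin: "finite R"
    and adj: "adjb P (f l) (f (Suc l))"
  shows "(\<Sum>r\<in>R. (if f l = Inl r \<and> f (Suc l) = Inr k then 1 else 0::real)) = (if f (Suc l) = Inr k then 1 else 0)"
proof (cases "f (Suc l) = Inr k")
  case True
  show ?thesis
  proof (cases "f l")
    case (Inr k')
    then show ?thesis using adj True by simp
  next
    case (Inl r')
    then have "r' \<in> R" using adj True PRM by auto
    then show ?thesis using True Inl fin by simp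
  qed
qed simp

lemma ind_sum_r2:
  assumes PRM: "\<And>r k. P r k \<Longrightarrow> r \<in> R \<and> k \<in> M" and fin: "finite R"
    and adj: "adjb P (f l) (f (Suc l))"
  shows "(\<Sum>r\<in>R. (if f l = Inr k \<and> f (Suc l) = Inl r then 1 else 0::real)) = (if f l = Inr k then 1 else 0)"
proof (cases "f l = Inr k")
  case True
  show ?thesis
  proof (cases "f (Suc l)")
    case (Inr k')
    then show ?thesis using adj True by simp
  next
    case (Inl r')
    then have "r' \<in> R" using adj True PRM by auto
    then show ?thesis using True Inl fin by simp
  qed
qed simp

lemma telescope:
  assumes "a \<le> b"
  shows "(\<Sum>l\<in>{a..<b}. (g l - g (Suc l))::real) = g a - g b"
proof -
  have "(\<Sum>l\<in>{a..<b}. (g l - g (Suc l))) = - (\<Sum>l\<in>{a..<b}. (g (Suc l) - g l))"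
    by (simp add: sum_negf[symmetric])
  also have "\<dots> = g a - g b" using sum_Suc_diff'[OF assms, of g] by simp
  finally show ?thesis .
qed

lemma segment_z:
  fixes f :: "nat \<Rightarrow> 'r + 'k" and P :: "'r \<Rightarrow> 'k \<Rightarrow> bool"
  assumes fin: "finite R" "finite M"
    and PRM: "\<And>r k. P r k \<Longrightarrow> r \<in> R \<and> k \<in> M"
    and ab: "a < b" and inj: "inj_on f {a..<b}"
    and adj: "\<forall>l. adjb P (f l) (f (Suc l))"
    and nb: "Suc a < b \<longrightarrow> f (Suc (Suc a)) \<noteq> f a"
  defines "z \<equiv> \<lambda>r k. (\<Sum>l\<in>{a..<b}. (if f l = Inl r \<and> f (Suc l) = Inr k then 1 else 0)
                       - (if f l = Inr k \<and> f (Suc l) = Inl r then 1 else 0)) :: real"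
  shows "\<forall>r k. z r k \<noteq> 0 \<longrightarrow> P r k"
    and "\<forall>r k. z r k \<in> {-1, 0, 1}"
    and "\<exists>r k. z r k \<noteq> 0"
    and "\<forall>r\<in>R. (\<Sum>k\<in>M. z r k) = (if f a = Inl r then 1 else 0) - (if f b = Inl r then 1 else 0)"
    and "\<forall>k\<in>M. (\<Sum>r\<in>R. z r k) = (if f b = Inr k then 1 else 0) - (if f a = Inr k then 1 else 0)"
proof -
  define A where "A r k = card {l\<in>{a..<b}. f l = Inl r \<and> f (Suc l) = Inr k}" for r k
  define B where "B r k = card {l\<in>{a..<b}. f l = Inr k \<and> f (Suc l) = Inl r}" for r k
  have zAB: "z r k = real (A r k) - real (B r k)" for r k
    unfolding z_def A_def B_def
    by (simp add: sum_subtractf sum_ind_card)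
  have A1: "A r k \<le> 1" for r k unfolding A_def by (rule card_le1_inj[OF inj]) simp
  have B1: "B r k \<le> 1" for r k unfolding B_def by (rule card_le1_inj[OF inj]) simp
  show "\<forall>r k. z r k \<noteq> 0 \<longrightarrow> P r k"
  proof (intro allI impI)
    fix r k assume nz: "z r k \<noteq> 0"
    show "P r k"
    proof (rule ccontr)
      assume nP: "\<not> P r k"
      have "\<And>l. \<not> (f l = Inl r \<and> f (Suc l) = Inr k)" "\<And>l. \<not> (f l = Inr k \<and> f (Suc l) = Inl r)"
        using adj nP by (metis adjb_simps(1), metis adjb_simps(2))
      then have "z r k = 0" unfolding z_def by (intro sum.neutral ballI) simp
      then show False using nz by simp
    qed
  qed
  show "\<forall>r k. z r k \<in> {-1, 0, 1}"
  proof (intro allI)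
    fix r k
    have "A r k = 0 \<or> A r k = 1" "B r k = 0 \<or> B r k = 1" using A1[of r k] B1[of r k] by auto
    then show "z r k \<in> {-1, 0, 1}" unfolding zAB by auto
  qed
  show "\<exists>r k. z r k \<noteq> 0"
  proof (cases "f a")
    case (Inl r)
    have adja: "adjb P (f a) (f (Suc a))" using adj by blast
    then obtain k where k: "f (Suc a) = Inr k" using Inl by (cases "f (Suc a)") auto
    have "a \<in> {l\<in>{a..<b}. f l = Inl r \<and> f (Suc l) = Inr k}" using Inl k ab by simp
    then have "A r k \<noteq> 0" unfolding A_def by (auto simp: card_eq_0_iff)
    moreover have "{l\<in>{a..<b}. f l = Inr k \<and> f (Suc l) = Inl r} = {}"
    proof (rule ccontr)
      assume "{l\<in>{a..<b}. f l = Inr k \<and> f (Suc l) = Inl r} \<noteq> {}"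
      then obtain l where l: "l \<in> {a..<b}" "f l = Inr k" "f (Suc l) = Inl r" by auto
      have "l \<noteq> a" using l Inl by auto
      then have "Suc a \<in> {a..<b}" using l by auto
      then have "l = Suc a" using inj l k unfolding inj_on_def by metis
      then show False using nb l Inl \<open>Suc a \<in> {a..<b}\<close> by auto
    qed
    then have "B r k = 0" unfolding B_def by simp
    ultimately show ?thesis using zAB by (intro exI[of _ r] exI[of _ k]) simp
  next
    case (Inr k)
    have adja: "adjb P (f a) (f (Suc a))" using adj by blast
    then obtain r where r: "f (Suc a) = Inl r" using Inr by (cases "f (Suc a)") auto
    have "a \<in> {l\<in>{a..<b}. f l = Inr k \<and> f (Suc l) = Inl r}" using Inr r ab by simp
    then have "B r k \<noteq> 0" unfolding B_def by (auto simp: card_eq_0_iff)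
    moreover have "{l\<in>{a..<b}. f l = Inl r \<and> f (Suc l) = Inr k} = {}"
    proof (rule ccontr)
      assume "{l\<in>{a..<b}. f l = Inl r \<and> f (Suc l) = Inr k} \<noteq> {}"
      then obtain l where l: "l \<in> {a..<b}" "f l = Inl r" "f (Suc l) = Inr k" by auto
      have "l \<noteq> a" using l Inr by auto
      then have "Suc a \<in> {a..<b}" using l by auto
      then have "l = Suc a" using inj l r unfolding inj_on_def by metis
      then show False using nb l Inr \<open>Suc a \<in> {a..<b}\<close> by auto
    qed
    then have "A r k = 0" unfolding A_def by simp
    ultimately show ?thesis using zAB by (intro exI[of _ r] exI[of _ k]) simp
  qed
  show "\<forall>r\<in>R. (\<Sum>k\<in>M. z r k) = (if f a = Inl r then 1 else 0) - (if f b = Inl r then 1 else 0)"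
  proof
    fix r assume "r \<in> R"
    have "(\<Sum>k\<in>M. z r k) = (\<Sum>l\<in>{a..<b}. \<Sum>k\<in>M. (if f l = Inl r \<and> f (Suc l) = Inr k then 1 else 0)
                       - (if f l = Inr k \<and> f (Suc l) = Inl r then 1 else 0))"
      unfolding z_def by (rule sum.swap)
    also have "\<dots> = (\<Sum>l\<in>{a..<b}. (if f l = Inl r then 1 else 0) - (if f (Suc l) = Inl r then 1 else 0))"
      by (intro sum.cong refl) (simp add: sum_subtractf ind_sum_k1[of P R M f, OF PRM fin(2) adj[rule_format]] ind_sum_k2[of P R M f, OF PRM fin(2) adj[rule_format]])
    also have "\<dots> = (if f a = Inl r then 1 else 0) - (if f b = Inl r then 1 else 0)"
      using ab by (intro telescope) simp
    finally show "(\<Sum>k\<in>M. z r k) = (if f a = Inl r then 1 else 0) - (if f b = Inl r then 1 else 0)" .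
  qed
  show "\<forall>k\<in>M. (\<Sum>r\<in>R. z r k) = (if f b = Inr k then 1 else 0) - (if f a = Inr k then 1 else 0)"
  proof
    fix k assume "k \<in> M"
    have "(\<Sum>r\<in>R. z r k) = (\<Sum>l\<in>{a..<b}. \<Sum>r\<in>R. (if f l = Inl r \<and> f (Suc l) = Inr k then 1 else 0)
                       - (if f l = Inr k \<and> f (Suc l) = Inl r then 1 else 0))"
      unfolding z_def by (rule sum.swap)
    also have "\<dots> = (\<Sum>l\<in>{a..<b}. (if f (Suc l) = Inr k then 1 else 0) - (if f l = Inr k then 1 else 0))"
      by (intro sum.cong refl) (simp add: sum_subtractf ind_sum_r1[of P R M f, OF PRM fin(1) adj[rule_format]] ind_sum_r2[of P R M f, OF PRM fin(1) adj[rule_format]])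
    also have "\<dots> = (\<Sum>l\<in>{a..<b}. (\<lambda>l. -(if f l = Inr k then 1 else 0::real)) l - (\<lambda>l. -(if f l = Inr k then 1 else 0::real)) (Suc l))"
      by (intro sum.cong refl) simp
    also have "\<dots> = (\<lambda>l. -(if f l = Inr k then 1 else 0::real)) a - (\<lambda>l. -(if f l = Inr k then 1 else 0::real)) b"
      using ab by (intro telescope) simp
    finally show "(\<Sum>r\<in>R. z r k) = (if f b = Inr k then 1 else 0) - (if f a = Inr k then 1 else 0)" by simp
  qed
qed

lemma Ints_01_False: "(y::real) \<in> \<int> \<Longrightarrow> 0 < y \<Longrightarrow> y < 1 \<Longrightarrow> False"
proof -
  assume "y \<in> \<int>" "0 < y" "y < 1"
  then obtain n where n: "y = of_int n" by (auto elim: Ints_cases)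
  then have "0 < n" "n < 1" using \<open>0 < y\<close> \<open>y < 1\<close> by simp_all
  then show False by simp
qed

lemma frac_partner:
  fixes g :: "'a \<Rightarrow> real"
  assumes "finite S" "i \<in> S" "\<forall>j\<in>S. 0 \<le> g j \<and> g j \<le> 1" "0 < g i" "g i < 1"
    and "(\<Sum>j\<in>S. g j) \<in> \<int>"
  shows "\<exists>j\<in>S. j \<noteq> i \<and> 0 < g j \<and> g j < 1"
proof (rule ccontr)
  assume "\<not> ?thesis"
  then have int: "\<forall>j\<in>S - {i}. g j \<in> \<int>"
    using assms(3) by (metis DiffD1 DiffD2 Ints_0 Ints_1 insertI1 order_le_less)
  have "(\<Sum>j\<in>S. g j) = g i + (\<Sum>j\<in>S - {i}. g j)" using assms(1,2) by (rule sum.remove)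
  moreover have "(\<Sum>j\<in>S - {i}. g j) \<in> \<int>" using int by (intro Ints_sum) auto
  ultimately have "g i \<in> \<int>" using assms(6) by (metis Ints_diff add_diff_cancel_right')
  then show False using Ints_01_False assms(4,5) by blast
qed

lemma pos_lower:
  fixes S :: "real set"
  assumes "finite S" "\<forall>s\<in>S. 0 < s"
  shows "\<exists>e>0. \<forall>s\<in>S. e \<le> s"
proof -
  have "0 < Min (insert 1 S)" using assms by (subst Min_gr_iff) auto
  moreover have "\<forall>s\<in>S. Min (insert 1 S) \<le> s" using assms by auto
  ultimately show ?thesis by blast
qed

lemma abs_mult_le1: "\<bar>t\<bar> \<le> (e::real) \<Longrightarrow> \<bar>y\<bar> \<le> 1 \<Longrightarrow> \<bar>t * y\<bar> \<le> e"
proof -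
  assume a: "\<bar>t\<bar> \<le> e" "\<bar>y\<bar> \<le> 1"
  have "\<bar>t * y\<bar> = \<bar>t\<bar> * \<bar>y\<bar>" by (rule abs_mult)
  also have "\<dots> \<le> \<bar>t\<bar> * 1" using a(2) by (intro mult_left_mono) auto
  finally show ?thesis using a(1) by simp
qed

lemma direction:
  fixes R :: "'r set" and M :: "'k set" and \<delta> :: "'r \<Rightarrow> 'k \<Rightarrow> real" and d :: "'k \<Rightarrow> nat"
  assumes fin: "finite R" "finite M"
    and d01: "\<forall>r k. \<delta> r k \<in> {0, 1}"
    and feas: "relaxed_feasible R M \<delta> d x"
    and r0: "r0 \<in> R" and k0: "k0 \<in> M" and fr: "x r0 k0 \<notin> {0, 1}"
  shows "\<exists>z. (\<forall>r k. z r k \<in> {-1, 0, 1}) \<and> (\<forall>r k. (r \<notin> R \<or> k \<notin> M) \<longrightarrow> z r k = 0)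
      \<and> (\<exists>r\<in>R. \<exists>k\<in>M. z r k \<noteq> 0)
      \<and> (\<exists>e>0. relaxed_feasible R M \<delta> d (\<lambda>r k. x r k + e * z r k)
              \<and> relaxed_feasible R M \<delta> d (\<lambda>r k. x r k - e * z r k))"
proof -
  note F = feas[unfolded relaxed_feasible_def]
  have out0: "\<And>r k. r \<notin> R \<or> k \<notin> M \<Longrightarrow> x r k = 0" using F by blast
  have box: "\<And>r k. r \<in> R \<Longrightarrow> k \<in> M \<Longrightarrow> 0 \<le> x r k \<and> x r k \<le> 1 \<and> x r k \<le> \<delta> r k" using F by blast
  have colF: "\<And>k. k \<in> M \<Longrightarrow> (\<Sum>r\<in>R. x r k) \<ge> real (d k)" using F by blast
  have rowF: "\<And>r. r \<in> R \<Longrightarrow> (\<Sum>k\<in>M. x r k) \<le> 1" using F by blast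
  define P where "P r k = (r \<in> R \<and> k \<in> M \<and> 0 < x r k \<and> x r k < 1)" for r k
  define TR where "TR r = ((\<Sum>k\<in>M. x r k) = 1)" for r
  define TM where "TM k = ((\<Sum>r\<in>R. x r k) = real (d k))" for k
  define T where "T = case_sum TR TM"
  have PRM: "\<And>r k. P r k \<Longrightarrow> r \<in> R \<and> k \<in> M" by (simp add: P_def)
  have P0: "P r0 k0" using r0 k0 fr box[OF r0 k0] by (auto simp: P_def order_le_less)
  have deg: "\<exists>w. adjb P v w \<and> w \<noteq> u" if uv: "adjb P u v" "T v" for u v
  proof (cases u)
    case (Inl r)
    then obtain k where v: "v = Inr k" using uv by (cases v) auto
    have Prk: "P r k" using uv Inl v by simp
    have "TM k" using uv v by (simp add: T_def)
    have "\<exists>r'\<in>R. r' \<noteq> r \<and> 0 < x r' k \<and> x r' k < 1"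
      using Prk \<open>TM k\<close> box fin by (intro frac_partner) (auto simp: P_def TM_def)
    then obtain r' where "r' \<in> R" "r' \<noteq> r" "0 < x r' k" "x r' k < 1" by blast
    then have "adjb P v (Inl r') \<and> Inl r' \<noteq> u" using Prk v Inl by (simp add: P_def)
    then show ?thesis by blast
  next
    case (Inr k)
    then obtain r where v: "v = Inl r" using uv by (cases v) auto
    have Prk: "P r k" using uv Inr v by simp
    have "TR r" using uv v by (simp add: T_def)
    have "\<exists>k'\<in>M. k' \<noteq> k \<and> 0 < x r k' \<and> x r k' < 1"
      using Prk \<open>TR r\<close> box fin by (intro frac_partner) (auto simp: P_def TR_def)
    then obtain k' where "k' \<in> M" "k' \<noteq> k" "0 < x r k'" "x r k' < 1" by blast
    then have "adjb P v (Inr k') \<and> Inr k' \<noteq> u" using Prk v Inr by (simp add: P_def)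
    then show ?thesis by blast
  qed
  obtain f a b where fab: "a < b" "inj_on f {a..<b}" "\<forall>l. adjb P (f l) (f (Suc l))"
     "Suc a < b \<longrightarrow> f (Suc (Suc a)) \<noteq> f a" "f b = f a \<or> (\<not> T (f a) \<and> \<not> T (f b))"
    using walk_exists[OF fin PRM deg P0] by blast
  define z where "z \<equiv> \<lambda>r k. (\<Sum>l\<in>{a..<b}. (if f l = Inl r \<and> f (Suc l) = Inr k then 1 else 0)
                       - (if f l = Inr k \<and> f (Suc l) = Inl r then 1 else 0)) :: real"
  note seg = segment_z[where R=R and M=M and P=P and a=a and b=b and f=f, OF fin PRM fab(1-4)]
  have zP: "\<And>r k. z r k \<noteq> 0 \<Longrightarrow> P r k" using seg(1) unfolding z_def by blast
  have z01: "\<And>r k. z r k \<in> {-1, 0, 1}" using seg(2) unfolding z_def by blast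
  have zabs: "\<bar>z r k\<bar> \<le> 1" for r k using z01[of r k] by auto
  have rowz: "\<And>r. r \<in> R \<Longrightarrow> \<bar>\<Sum>k\<in>M. z r k\<bar> \<le> 1 \<and> (TR r \<longrightarrow> (\<Sum>k\<in>M. z r k) = 0)"
  proof -
    fix r assume r: "r \<in> R"
    have e: "(\<Sum>k\<in>M. z r k) = (if f a = Inl r then 1 else 0) - (if f b = Inl r then 1 else 0)"
      using seg(4) r unfolding z_def by blast
    have "TR r \<Longrightarrow> (\<Sum>k\<in>M. z r k) = 0" using e fab(5) by (auto simp: T_def)
    then show "\<bar>\<Sum>k\<in>M. z r k\<bar> \<le> 1 \<and> (TR r \<longrightarrow> (\<Sum>k\<in>M. z r k) = 0)" using e by auto
  qed
  have colz: "\<And>k. k \<in> M \<Longrightarrow> \<bar>\<Sum>r\<in>R. z r k\<bar> \<le> 1 \<and> (TM k \<longrightarrow> (\<Sum>r\<in>R. z r k) = 0)"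
  proof -
    fix k assume k: "k \<in> M"
    have e: "(\<Sum>r\<in>R. z r k) = (if f b = Inr k then 1 else 0) - (if f a = Inr k then 1 else 0)"
      using seg(5) k unfolding z_def by blast
    have "TM k \<Longrightarrow> (\<Sum>r\<in>R. z r k) = 0" using e fab(5) by (auto simp: T_def)
    then show "\<bar>\<Sum>r\<in>R. z r k\<bar> \<le> 1 \<and> (TM k \<longrightarrow> (\<Sum>r\<in>R. z r k) = 0)" using e by auto
  qed
  define Pset where "Pset = {p\<in>R \<times> M. P (fst p) (snd p)}"
  define S1 where "S1 = (\<lambda>p. x (fst p) (snd p)) ` Pset"
  define S2 where "S2 = (\<lambda>p. 1 - x (fst p) (snd p)) ` Pset"
  define S3 where "S3 = (\<lambda>k. (\<Sum>r\<in>R. x r k) - real (d k)) ` {k\<in>M. \<not> TM k}"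
  define S4 where "S4 = (\<lambda>r. 1 - (\<Sum>k\<in>M. x r k)) ` {r\<in>R. \<not> TR r}"
  have "Pset \<subseteq> R \<times> M" unfolding Pset_def by blast
  then have "finite Pset" using finite_cartesian_product[OF fin] by (rule finite_subset)
  moreover have "finite {k\<in>M. \<not> TM k}" "finite {r\<in>R. \<not> TR r}" using fin by simp_all
  ultimately have finS: "finite (S1 \<union> S2 \<union> S3 \<union> S4)" unfolding S1_def S2_def S3_def S4_def
    by simp
  have posS: "\<forall>s\<in>S1 \<union> S2 \<union> S3 \<union> S4. 0 < s"
  proof -
    have "\<forall>s\<in>S3. 0 < s"
    proof
      fix s assume "s \<in> S3"
      then obtain k where k: "k \<in> M" "\<not> TM k" "s = (\<Sum>r\<in>R. x r k) - real (d k)" unfolding S3_def by blast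
      then show "0 < s" using colF[OF k(1)] unfolding TM_def by simp
    qed
    moreover have "\<forall>s\<in>S4. 0 < s"
    proof
      fix s assume "s \<in> S4"
      then obtain r where r: "r \<in> R" "\<not> TR r" "s = 1 - (\<Sum>k\<in>M. x r k)" unfolding S4_def by blast
      then show "0 < s" using rowF[OF r(1)] unfolding TR_def by simp
    qed
    moreover have "\<forall>s\<in>S1. 0 < s" unfolding S1_def Pset_def P_def by force
    moreover have "\<forall>s\<in>S2. 0 < s" unfolding S2_def Pset_def P_def by force
    ultimately show ?thesis by blast
  qed
  obtain e where e: "e > 0" "\<forall>s\<in>S1 \<union> S2 \<union> S3 \<union> S4. e \<le> s" using pos_lower[OF finS posS] by blast
  have eP: "e \<le> x r k \<and> e \<le> 1 - x r k" if Prk: "P r k" for r k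
  proof -
    have "(r,k) \<in> Pset" using Prk PRM unfolding Pset_def by simp
    then have "(\<lambda>p. x (fst p) (snd p)) (r,k) \<in> S1" "(\<lambda>p. 1 - x (fst p) (snd p)) (r,k) \<in> S2"
      unfolding S1_def S2_def by (rule imageI)+
    then have "x r k \<in> S1" "1 - x r k \<in> S2" by simp_all
    then show ?thesis using e(2) by blast
  qed
  have eM: "e \<le> (\<Sum>r\<in>R. x r k) - real (d k)" if "k \<in> M" "\<not> TM k" for k
  proof -
    have "(\<Sum>r\<in>R. x r k) - real (d k) \<in> S3" unfolding S3_def using that by blast
    then show ?thesis using e(2) by blast
  qed
  have eR: "e \<le> 1 - (\<Sum>k\<in>M. x r k)" if "r \<in> R" "\<not> TR r" for r
  proof -
    have "1 - (\<Sum>k\<in>M. x r k) \<in> S4" unfolding S4_def using that by blast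
    then show ?thesis using e(2) by blast
  qed
  have feas_t: "relaxed_feasible R M \<delta> d (\<lambda>r k. x r k + t * z r k)" if t: "\<bar>t\<bar> \<le> e" for t
  proof -
    have A: "\<forall>r k. (r \<notin> R \<or> k \<notin> M) \<longrightarrow> x r k + t * z r k = 0"
    proof (intro allI impI)
      fix r k assume "r \<notin> R \<or> k \<notin> M"
      moreover then have "z r k = 0" using zP PRM by blast
      ultimately show "x r k + t * z r k = 0" using out0 by simp
    qed
    have B: "0 \<le> x r k + t * z r k \<and> x r k + t * z r k \<le> 1 \<and> x r k + t * z r k \<le> \<delta> r k"
      if rk: "r \<in> R" "k \<in> M" for r k
    proof (cases "z r k = 0")
      case True then show ?thesis using box[OF rk] by simp
    next
      case False
      then have Prk: "P r k" by (rule zP)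
      then have "0 < x r k" by (simp add: P_def)
      then have "\<delta> r k = 1" using box[OF rk] d01[rule_format, of r k] by auto
      moreover have "\<bar>t * z r k\<bar> \<le> e"
        using t zabs[of r k] by (rule abs_mult_le1)
      ultimately show ?thesis using eP[OF Prk] by auto
    qed
    have C: "(\<Sum>r\<in>R. x r k + t * z r k) \<ge> real (d k)" if k: "k \<in> M" for k
    proof -
      have eq: "(\<Sum>r\<in>R. x r k + t * z r k) = (\<Sum>r\<in>R. x r k) + t * (\<Sum>r\<in>R. z r k)"
        by (simp add: sum.distrib sum_distrib_left)
      show ?thesis
      proof (cases "TM k")
        case True then show ?thesis using eq colz[OF k] colF[OF k] by simp
      next
        case False
        have "\<bar>t * (\<Sum>r\<in>R. z r k)\<bar> \<le> e"
          using t colz[OF k] abs_mult_le1 by blast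
        then show ?thesis using eq eM[OF k False] by auto
      qed
    qed
    have D: "(\<Sum>k\<in>M. x r k + t * z r k) \<le> 1" if r: "r \<in> R" for r
    proof -
      have eq: "(\<Sum>k\<in>M. x r k + t * z r k) = (\<Sum>k\<in>M. x r k) + t * (\<Sum>k\<in>M. z r k)"
        by (simp add: sum.distrib sum_distrib_left)
      show ?thesis
      proof (cases "TR r")
        case True then show ?thesis using eq rowz[OF r] rowF[OF r] by simp
      next
        case False
        have "\<bar>t * (\<Sum>k\<in>M. z r k)\<bar> \<le> e"
          using t rowz[OF r] abs_mult_le1 by blast
        then show ?thesis using eq eR[OF r False] by auto
      qed
    qed
    show ?thesis unfolding relaxed_feasible_def using A B C D by blast
  qed
  have "relaxed_feasible R M \<delta> d (\<lambda>r k. x r k + e * z r k)" using feas_t[of e] e by simp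
  moreover have "relaxed_feasible R M \<delta> d (\<lambda>r k. x r k - e * z r k)"
    using feas_t[of "-e"] e by simp
  moreover have "\<exists>r\<in>R. \<exists>k\<in>M. z r k \<noteq> 0" using seg(3) zP PRM unfolding z_def by blast
  moreover have "\<forall>r k. (r \<notin> R \<or> k \<notin> M) \<longrightarrow> z r k = 0" using zP PRM by blast
  ultimately show ?thesis using z01 e(1) by blast
qed



lemma prob_U: "prob_space (uniform_measure lborel {0..1::real})"
  by (rule prob_space_uniform_measure) simp_all

lemma U_singleton: "emeasure (uniform_measure lborel {0..1::real}) {v} = 0"
proof -
  have "{0..1} \<inter> {v} = {} \<or> {0..1} \<inter> {v} = {v::real}" by auto
  then have "emeasure lborel ({0..1} \<inter> {v}) = 0" by (metis emeasure_empty emeasure_lborel_singleton)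
  then show ?thesis by (subst emeasure_uniform_measure) simp_all
qed

lemma hyper_null:
  fixes I :: "'i set" and w :: "'i \<Rightarrow> real"
  assumes fin: "finite I" and p: "p \<in> I" and wp: "w p \<noteq> 0"
  shows "AE c in PiM I (\<lambda>_. uniform_measure lborel {0..1::real}). (\<Sum>q\<in>I. c q * w q) \<noteq> 0"
proof -
  define U where "U = uniform_measure lborel {0..1::real}"
  have pU: "prob_space U" unfolding U_def by (rule prob_U)
  interpret product_sigma_finite "\<lambda>_. U"
    unfolding product_sigma_finite_def using prob_space_imp_sigma_finite[OF pU] by simp
  define J where "J = I - {p}"
  have IJ: "I = insert p J" "p \<notin> J" "finite J" using p fin by (auto simp: J_def)
  define N where "N = {c \<in> space (PiM I (\<lambda>_. U)). (\<Sum>q\<in>I. c q * w q) = 0}"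
  have sU: "sets U = sets borel" by (simp add: U_def)
  have comp: "(\<lambda>x. x q) \<in> borel_measurable (PiM I (\<lambda>_. U))" if "q \<in> I" for q
    using measurable_component_singleton[OF that, of "\<lambda>_. U"] measurable_cong_sets[OF refl sU, of "PiM I (\<lambda>_. U)"] by (simp only:)
  have meas: "(\<lambda>c. \<Sum>q\<in>I. c q * w q) \<in> borel_measurable (PiM I (\<lambda>_. U))"
    by (intro borel_measurable_sum borel_measurable_times comp measurable_const) simp_all
  have Nsets: "N \<in> sets (PiM I (\<lambda>_. U))"
  proof -
    have "N = (\<lambda>c. \<Sum>q\<in>I. c q * w q) -` {0} \<inter> space (PiM I (\<lambda>_. U))" by (auto simp: N_def)
    then show ?thesis using measurable_sets[OF meas, of "{0}"] by simp
  qed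
  have "emeasure (PiM I (\<lambda>_. U)) N = (\<integral>\<^sup>+ c. indicator N c \<partial>PiM I (\<lambda>_. U))"
    using Nsets by simp
  also have "\<dots> = (\<integral>\<^sup>+ x. (\<integral>\<^sup>+ y. indicator N (x(p := y)) \<partial>U) \<partial>PiM J (\<lambda>_. U))"
  proof -
    have NsetsJ: "N \<in> sets (PiM (insert p J) (\<lambda>_. U))" using Nsets IJ(1) by simp
    show ?thesis
      using product_nn_integral_insert[OF IJ(3) IJ(2) borel_measurable_indicator[OF NsetsJ]]
      unfolding IJ(1) .
  qed
  also have "\<dots> = (\<integral>\<^sup>+ x. 0 \<partial>PiM J (\<lambda>_. U))"
  proof (rule nn_integral_cong)
    fix x assume x: "x \<in> space (PiM J (\<lambda>_. U))"
    define v where "v = - (\<Sum>q\<in>J. x q * w q) / w p"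
    have le: "indicator N (x(p := y)) \<le> (indicator {v} y :: ennreal)" for y
    proof (cases "x(p := y) \<in> N")
      case True
      then have "(\<Sum>q\<in>I. (x(p := y)) q * w q) = 0" unfolding N_def by simp
      moreover have "(\<Sum>q\<in>I. (x(p := y)) q * w q) = y * w p + (\<Sum>q\<in>J. x q * w q)"
        unfolding IJ(1) using IJ by (simp add: sum.insert) (intro sum.cong refl, auto)
      ultimately have "y = v" unfolding v_def using wp by (simp add: field_simps)
      then show ?thesis by (simp add: indicator_def)
    qed simp
    have "(\<integral>\<^sup>+ y. indicator N (x(p := y)) \<partial>U) \<le> (\<integral>\<^sup>+ y. indicator {v} y \<partial>U)"
      by (intro nn_integral_mono le)
    also have "\<dots> = emeasure U {v}" by (simp add: U_def)
    also have "\<dots> = 0" unfolding U_def by (rule U_singleton)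
    finally show "(\<integral>\<^sup>+ y. indicator N (x(p := y)) \<partial>U) = 0" by simp
  qed
  also have "\<dots> = 0" by simp
  finally have "emeasure (PiM I (\<lambda>_. U)) N = 0" .
  then have "AE c in PiM I (\<lambda>_. U). (\<Sum>q\<in>I. c q * w q) \<noteq> 0"
    by (subst AE_iff_measurable[OF Nsets]) (auto simp: N_def)
  then show ?thesis unfolding U_def .
qed

lemma cont_coord: "continuous_on UNIV (\<lambda>x::'r \<Rightarrow> 'k \<Rightarrow> real. x r k)"
  by (rule continuous_on_product_then_coordinatewise[OF continuous_on_product_coordinates])

lemma closed_const_imp: "closed {x. Q x} \<Longrightarrow> closed {x. P \<longrightarrow> Q x}"
  by (cases P) auto

lemma closed_feasible:
  "closed {x. relaxed_feasible R M \<delta> d x}"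
proof -
  have c1: "closed {x::'a \<Rightarrow> 'b \<Rightarrow> real. \<forall>r k. (r \<notin> R \<or> k \<notin> M) \<longrightarrow> x r k = 0}"
    by (intro closed_Collect_all closed_const_imp closed_Collect_eq cont_coord continuous_on_const)
  have c2: "closed {x::'a \<Rightarrow> 'b \<Rightarrow> real. \<forall>r\<in>R. \<forall>k\<in>M. 0 \<le> x r k \<and> x r k \<le> 1 \<and> x r k \<le> \<delta> r k}"
    unfolding Ball_def
    by (intro closed_Collect_all closed_const_imp closed_Collect_conj closed_Collect_le cont_coord continuous_on_const)
  have c3: "closed {x::'a \<Rightarrow> 'b \<Rightarrow> real. \<forall>k\<in>M. (\<Sum>r\<in>R. x r k) \<ge> real (d k)}"
    unfolding Ball_def
    by (intro closed_Collect_all closed_const_imp closed_Collect_le continuous_on_sum cont_coord continuous_on_const)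
  have c4: "closed {x::'a \<Rightarrow> 'b \<Rightarrow> real. \<forall>r\<in>R. (\<Sum>k\<in>M. x r k) \<le> 1}"
    unfolding Ball_def
    by (intro closed_Collect_all closed_const_imp closed_Collect_le continuous_on_sum cont_coord continuous_on_const)
  have "{x. relaxed_feasible R M \<delta> d x} = {x::'a \<Rightarrow> 'b \<Rightarrow> real. \<forall>r k. (r \<notin> R \<or> k \<notin> M) \<longrightarrow> x r k = 0}
     \<inter> {x. \<forall>r\<in>R. \<forall>k\<in>M. 0 \<le> x r k \<and> x r k \<le> 1 \<and> x r k \<le> \<delta> r k}
     \<inter> {x. \<forall>k\<in>M. (\<Sum>r\<in>R. x r k) \<ge> real (d k)} \<inter> {x. \<forall>r\<in>R. (\<Sum>k\<in>M. x r k) \<le> 1}"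
    unfolding relaxed_feasible_def by blast
  then show ?thesis using c1 c2 c3 c4 by (simp add: closed_Int)
qed

lemma compact_box:
  fixes B :: "'r \<Rightarrow> 'k \<Rightarrow> real set"
  assumes "\<And>r k. compact (B r k)"
  shows "compact {x::'r \<Rightarrow> 'k \<Rightarrow> real. \<forall>r k. x r k \<in> B r k}"
proof -
  have inner: "compact (PiE UNIV (B r))" for r
  proof -
    have "compactin (product_topology (\<lambda>_. euclidean) UNIV) (PiE UNIV (B r))"
      using assms by (subst compactin_PiE) auto
    then show ?thesis by (simp add: euclidean_product_topology)
  qed
  have "compactin (product_topology (\<lambda>_. euclidean) UNIV) (PiE UNIV (\<lambda>r. PiE UNIV (B r)))"
    using inner by (subst compactin_PiE) auto
  then have "compact (PiE UNIV (\<lambda>r. PiE UNIV (B r)))" by (simp add: euclidean_product_topology)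
  moreover have "PiE UNIV (\<lambda>r. PiE UNIV (B r)) = {x. \<forall>r k. x r k \<in> B r k}"
    by (auto simp: PiE_UNIV_domain)
  ultimately show ?thesis by simp
qed

lemma lp_exists:
  fixes R :: "'r set" and M :: "'k set"
  assumes fin: "finite R" "finite M" and ex: "\<exists>x. relaxed_feasible R M \<delta> d x"
  shows "\<exists>x. lp_optimal R M \<delta> d c x"
proof -
  define B where "B r k = (if r \<in> R \<and> k \<in> M then {0..1} else {0::real})" for r k
  have cK: "compact {x::'r \<Rightarrow> 'k \<Rightarrow> real. \<forall>r k. x r k \<in> B r k}"
    by (rule compact_box) (simp add: B_def)
  have sub: "{x. relaxed_feasible R M \<delta> d x} \<subseteq> {x. \<forall>r k. x r k \<in> B r k}"
    unfolding relaxed_feasible_def B_def by auto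
  have cF: "compact {x. relaxed_feasible R M \<delta> d x}"
    using compact_Int_closed[OF cK closed_feasible[of R M \<delta> d]] sub by (simp add: Int_absorb1)
  have cont: "continuous_on {x. relaxed_feasible R M \<delta> d x} (lp_cost R M c)"
    unfolding lp_cost_def
    by (intro continuous_on_sum continuous_on_mult continuous_on_const continuous_on_subset[OF cont_coord]) auto
  obtain x where "x \<in> {x. relaxed_feasible R M \<delta> d x}" "\<forall>y\<in>{x. relaxed_feasible R M \<delta> d x}. lp_cost R M c x \<le> lp_cost R M c y"
    using continuous_attains_inf[OF cF _ cont] ex by blast
  then show ?thesis unfolding lp_optimal_def by auto
qed


lemma main_ae:
  fixes R :: "'r set" and M :: "'k set"
    and \<delta> :: "'r \<Rightarrow> 'k \<Rightarrow> real" and d :: "'k \<Rightarrow> nat"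
  assumes fin: "finite R" "finite M"
    and d01: "\<forall>r k. \<delta> r k \<in> {0, 1}"
    and ex: "\<exists>x. relaxed_feasible R M \<delta> d x"
  shows "AE c in cost_distr R M.
               (\<exists>x. lp_optimal R M \<delta> d c x) \<and>
               (\<forall>x. lp_optimal R M \<delta> d c x \<longrightarrow> x \<in> sched_set R M \<delta> d)"
proof -
  define Z where "Z = (\<lambda>g r k. if r \<in> R \<and> k \<in> M then g (r, k) else 0::real) ` (PiE (R \<times> M) (\<lambda>_. {-1, 0, 1::real}))"
  have finZ: "finite Z" unfolding Z_def using fin by (intro finite_imageI finite_PiE) auto
  have AEZ: "AE c in cost_distr R M. \<forall>z\<in>Z. (\<exists>p\<in>R \<times> M. z (fst p) (snd p) \<noteq> 0) \<longrightarrow>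
       (\<Sum>q\<in>R \<times> M. c q * z (fst q) (snd q)) \<noteq> 0"
  proof (rule AE_finite_allI[OF finZ])
    fix z assume "z \<in> Z"
    show "AE c in cost_distr R M. (\<exists>p\<in>R \<times> M. z (fst p) (snd p) \<noteq> 0) \<longrightarrow>
       (\<Sum>q\<in>R \<times> M. c q * z (fst q) (snd q)) \<noteq> 0"
    proof (cases "\<exists>p\<in>R \<times> M. z (fst p) (snd p) \<noteq> 0")
      case True
      then obtain p where p: "p \<in> R \<times> M" "z (fst p) (snd p) \<noteq> 0" by blast
      have "AE c in cost_distr R M. (\<Sum>q\<in>R \<times> M. c q * z (fst q) (snd q)) \<noteq> 0"
        unfolding cost_distr_def
        using hyper_null[of "R \<times> M" p "\<lambda>q. z (fst q) (snd q)"] p fin by simp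
      then show ?thesis by (rule AE_mp) simp
    qed simp
  qed
  show ?thesis
  proof (rule AE_mp[OF AEZ], intro AE_I2 impI conjI allI)
    fix c assume cZ: "\<forall>z\<in>Z. (\<exists>p\<in>R \<times> M. z (fst p) (snd p) \<noteq> 0) \<longrightarrow>
       (\<Sum>q\<in>R \<times> M. c q * z (fst q) (snd q)) \<noteq> 0"
    show "\<exists>x. lp_optimal R M \<delta> d c x" using lp_exists[OF fin ex] .
    fix x assume opt: "lp_optimal R M \<delta> d c x"
    have feas: "relaxed_feasible R M \<delta> d x" using opt unfolding lp_optimal_def by blast
    show "x \<in> sched_set R M \<delta> d"
    proof (rule ccontr)
      assume "x \<notin> sched_set R M \<delta> d"
      then obtain r0 k0 where r0: "r0 \<in> R" "k0 \<in> M" "x r0 k0 \<notin> {0, 1}"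
        using feas unfolding sched_set_def by blast
      obtain z e where z: "\<forall>r k. z r k \<in> {-1, 0, 1}" "\<forall>r k. (r \<notin> R \<or> k \<notin> M) \<longrightarrow> z r k = 0"
          "\<exists>r\<in>R. \<exists>k\<in>M. z r k \<noteq> 0" and e: "e > 0"
          "relaxed_feasible R M \<delta> d (\<lambda>r k. x r k + e * z r k)"
          "relaxed_feasible R M \<delta> d (\<lambda>r k. x r k - e * z r k)"
        using direction[OF fin d01 feas r0] by blast
      define L where "L = (\<Sum>r\<in>R. \<Sum>k\<in>M. c (r, k) * z r k)"
      have c1: "lp_cost R M c (\<lambda>r k. x r k + e * z r k) = lp_cost R M c x + e * L"
        unfolding lp_cost_def L_def by (simp add: algebra_simps sum.distrib sum_distrib_left)
      have c2: "lp_cost R M c (\<lambda>r k. x r k - e * z r k) = lp_cost R M c x - e * L"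
        unfolding lp_cost_def L_def by (simp add: algebra_simps sum_subtractf sum_distrib_left)
      have "lp_cost R M c x \<le> lp_cost R M c x + e * L" "lp_cost R M c x \<le> lp_cost R M c x - e * L"
        using opt e(2,3) c1 c2 unfolding lp_optimal_def by metis+
      then have "e * L = 0" by linarith
      then have L0: "L = 0" using e(1) by simp
      have zZ: "z \<in> Z"
      proof -
        define g where "g = restrict (\<lambda>p. z (fst p) (snd p)) (R \<times> M)"
        have "g \<in> PiE (R \<times> M) (\<lambda>_. {-1, 0, 1::real})" unfolding g_def using z(1) by auto
        moreover have "z = (\<lambda>r k. if r \<in> R \<and> k \<in> M then g (r, k) else 0)"
          unfolding g_def using z(2) by (intro ext) auto
        ultimately show ?thesis unfolding Z_def by blast
      qed
      have "\<exists>p\<in>R \<times> M. z (fst p) (snd p) \<noteq> 0" using z(3) by auto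
      then have "(\<Sum>q\<in>R \<times> M. c q * z (fst q) (snd q)) \<noteq> 0" using cZ zZ by blast
      moreover have "(\<Sum>q\<in>R \<times> M. c q * z (fst q) (snd q)) = L"
        unfolding L_def by (simp add: sum.cartesian_product split_beta)
      ultimately show False using L0 by simp
    qed
  qed
qed

theorem theorem2:
  fixes R :: "'r set" and M :: "'k set"
    and \<delta> :: "'r \<Rightarrow> 'k \<Rightarrow> real" and d :: "'k \<Rightarrow> nat"
  assumes "finite R" and "finite M"
    and "\<forall>r k. \<delta> r k \<in> {0, 1}"
    and "\<forall>k\<in>M. d k > 0"
  shows "((\<exists>x. relaxed_feasible R M \<delta> d x) \<longleftrightarrow> sched_set R M \<delta> d \<noteq> {}) \<and>
         (sched_set R M \<delta> d \<noteq> {} \<longrightarrow>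
            (AE c in cost_distr R M.
               (\<exists>x. lp_optimal R M \<delta> d c x) \<and>
               (\<forall>x. lp_optimal R M \<delta> d c x \<longrightarrow> x \<in> sched_set R M \<delta> d)))"
proof -
  have ps: "prob_space (cost_distr R M)"
    unfolding cost_distr_def by (rule prob_space_PiM) (rule prob_U)
  have s2r: "sched_set R M \<delta> d \<noteq> {} \<Longrightarrow> \<exists>x. relaxed_feasible R M \<delta> d x"
    unfolding sched_set_def by blast
  have r2s: "sched_set R M \<delta> d \<noteq> {}" if ex: "\<exists>x. relaxed_feasible R M \<delta> d x"
  proof -
    have AE: "AE c in cost_distr R M.
               (\<exists>x. lp_optimal R M \<delta> d c x) \<and>
               (\<forall>x. lp_optimal R M \<delta> d c x \<longrightarrow> x \<in> sched_set R M \<delta> d)"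
      using main_ae[OF assms(1-3) ex] .
    show ?thesis
    proof (rule ccontr)
      assume "\<not> sched_set R M \<delta> d \<noteq> {}"
      then have "AE c in cost_distr R M. False" using AE by (rule_tac AE_mp[OF AE]) auto
      then show False using prob_space.AE_False[OF ps] by simp
    qed
  qed
  show ?thesis using s2r r2s main_ae[OF assms(1-3)] by blast
qed

end
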